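(* Let $i\ge0$, let $\mathbf{e}_i$ be a 1-dimensional error pattern at level $i$, let $\mathbf{e}_{i+1}$ be a 1-dimensional preimage of $\mathbf{e}_i$, and let $P_{i+1}$ be the number of paths of $\mathbf{e}_{i+1}$. Then $\mathrm{wt}(\mathbf{e}_{i+1})+P_{i+1}\ge2\,\mathrm{wt}(\mathbf{e}_i)$.
   Context: 1-dimensional model. For $j\ge0$, the line at level $j$ is the cycle with vertex set $\mathbb{Z}/2^j\mathbb{Z}$ and edges $\{v,v+1\}$, $v\in\mathbb{Z}/2^j\mathbb{Z}$ (for $j=0$, one vertex with a loop edge). A 1-dimensional error pattern at level $j$ is a subset of these edges; $\mathrm{wt}$ is its number of edges; its syndrome is the set of vertices incident to an odd number of its edges. The number of paths of a pattern is the number of connected components (maximal runs of consecutive edges) of the pattern, except that it is $0$ when the pattern is the whole cycle. At level $j+1$, block $m\in\mathbb{Z}/2^j\mathbb{Z}$ consists of the left edge $\{2m,2m+1\}$ and right edge $\{2m+1,2m+2\}$ and corresponds to the edge $\{m,m+1\}$ at level $j$. One reduction stage applied to a pattern $\mathbf{f}$ at level $j+1$ with syndrome $S$: (a) for every block, if $2m+1,2m+2\in S$, flip (add mod 2) the right edge and remove both from $S$; (b) then for every block, if $2m+1$ is still in $S$, flip the left edge. In the resulting pattern $\mathbf{f}'$ each block contains $0$ or $2$ edges; the image of $\mathbf{f}$ is the pattern at level $j$ containing $\{m,m+1\}$ iff block $m\subseteq\mathbf{f}'$. A pattern $\mathbf{f}$ at level $j+1$ is a 1-dimensional preimage of $\mathbf{g}$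 at level $j$ if the image of $\mathbf{f}$ is $\mathbf{g}$. *)

theory Defs
  imports Main
begin

text \<open>Level j: the cycle on vertices {0..<2^j} (= Z/2^j Z). Edge number e (e < 2^j)
  is the edge {e, e+1 mod 2^j}; for j = 0 this is the loop at vertex 0.
  A pattern is a set of edge numbers.\<close>

definition edges1 :: "nat \<Rightarrow> nat set" where
  "edges1 j = {..<2^j}"

definition is_pattern1 :: "nat \<Rightarrow> nat set \<Rightarrow> bool" where
  "is_pattern1 j f \<longleftrightarrow> f \<subseteq> edges1 j"

definition wt :: "nat set \<Rightarrow> nat" where
  "wt f = card f"

definition incident1 :: "nat \<Rightarrow> nat \<Rightarrow> nat \<Rightarrow> bool" where
  "incident1 j e v \<longleftrightarrow> v = e \<or> v = (e + 1) mod 2^j"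

definition syndrome1 :: "nat \<Rightarrow> nat set \<Rightarrow> nat set" where
  "syndrome1 j f = {v. v < 2^j \<and> odd (card {e \<in> f. incident1 j e v})}"

definition adj1 :: "nat \<Rightarrow> nat set \<Rightarrow> (nat \<times> nat) set" where
  "adj1 j f = {(u, v). u \<in> f \<and> v \<in> f \<and> (v = (u + 1) mod 2^j \<or> u = (v + 1) mod 2^j)}"

definition conn1 :: "nat \<Rightarrow> nat set \<Rightarrow> (nat \<times> nat) set" where
  "conn1 j f = (adj1 j f)\<^sup>* \<inter> (f \<times> f)"

definition num_paths :: "nat \<Rightarrow> nat set \<Rightarrow> nat" where
  "num_paths j f = (if f = edges1 j then 0 else card (f // conn1 j f))"

definition symdiff :: "'a set \<Rightarrow> 'a set \<Rightarrow> 'a set" where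
  "symdiff A B = (A - B) \<union> (B - A)"

text \<open>One reduction stage from level j+1 to level j. Block m (m < 2^j) consists of the
  left edge 2m = {2m,2m+1} and the right edge 2m+1 = {2m+1,2m+2}.\<close>

definition stage_a_blocks :: "nat \<Rightarrow> nat set \<Rightarrow> nat set" where
  "stage_a_blocks j S = {m. m < 2^j \<and> 2*m+1 \<in> S \<and> (2*m+2) mod 2^(j+1) \<in> S}"

definition reduce1 :: "nat \<Rightarrow> nat set \<Rightarrow> nat set" where
  "reduce1 j f =
    (let S = syndrome1 (j+1) f;
         A = stage_a_blocks j S;
         f1 = symdiff f {2*m+1 | m. m \<in> A};
         S1 = S - ({2*m+1 | m. m \<in> A} \<union> {(2*m+2) mod 2^(j+1) | m. m \<in> A});
         f2 = symdiff f1 {2*m | m. m < 2^j \<and> 2*m+1 \<in> S1}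
     in f2)"

definition image1 :: "nat \<Rightarrow> nat set \<Rightarrow> nat set" where
  "image1 j f = {m. m < 2^j \<and> 2*m \<in> reduce1 j f \<and> 2*m+1 \<in> reduce1 j f}"

definition is_preimage1 :: "nat \<Rightarrow> nat set \<Rightarrow> nat set \<Rightarrow> bool" where
  "is_preimage1 j f g \<longleftrightarrow> is_pattern1 (j+1) f \<and> image1 j f = g"

end

theory Submission
  imports Defs
begin

lemma pred_iff:
  fixes N e v :: nat
  assumes "e < N" "v < N"
  shows "(e + 1) mod N = v \<longleftrightarrow> e = (v + N - 1) mod N"
proof (cases "e + 1 < N")
  case True
  then show ?thesis using assms
    by (cases v) (auto simp: mod_if)
next
  case False
  then have "e + 1 = N" using assms by simp
  then show ?thesis using assms
    by (cases v) (auto simp: mod_if)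
qed

lemma synd_iff:
  assumes f: "f \<subseteq> {..<2^j}" and j: "j \<ge> 1" and v: "v < 2^j"
  shows "v \<in> syndrome1 j f \<longleftrightarrow> ((v \<in> f) \<noteq> ((v + 2^j - 1) mod 2^j \<in> f))"
proof -
  define N :: nat where "N = 2^j"
  have N2: "N \<ge> 2" unfolding N_def using j
    by (metis one_le_numeral power_increasing power_one_right)
  define w where "w = (v + N - 1) mod N"
  have vw: "v \<noteq> w" unfolding w_def using N2 v N_def
    by (cases v) (auto simp: mod_if)
  have wN: "w < N" unfolding w_def using N2 by simp
  have w1: "(w + 1) mod N = v" using pred_iff[of w N v] wN v N_def w_def by simp
  have "e \<in> f \<Longrightarrow> incident1 j e v \<longleftrightarrow> e = v \<or> e = w" for e
    using f pred_iff[of e N v] v w1 unfolding incident1_def w_def N_def[symmetric]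
    by (auto simp: N_def)
  then have eq: "{e \<in> f. incident1 j e v} = ({v} \<inter> f) \<union> ({w} \<inter> f)"
    by auto
  have "card {e \<in> f. incident1 j e v} = (if v \<in> f then 1 else 0) + (if w \<in> f then 1 else 0)"
    unfolding eq using vw by (auto simp: card_insert_if)
  then show ?thesis unfolding syndrome1_def using v w_def N_def by auto
qed

lemma modpred:
  fixes N a :: nat assumes "N > 0"
  shows "(a mod N + N - 1) mod N = (a + N - 1) mod N"
proof -
  have "a mod N + N - 1 = a mod N + (N - 1)" "a + N - 1 = a + (N - 1)" using assms by auto
  then show ?thesis by (simp add: mod_add_left_eq)
qed

lemma p2gen:
  fixes N m :: nat assumes Npos: "N > 0" and mN: "2*m+1 < N"
  shows "((2*m+2) mod N + N - 1) mod N = 2*m+1"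
proof -
  have "((2*m+2) mod N + N - 1) mod N = (2*m+2 + N - 1) mod N" using modpred[OF Npos] by simp
  also have "2*m+2 + N - 1 = (2*m+1) + N" by simp
  finally show ?thesis using mN by (metis mod_add_self2 mod_less)
qed

lemma run_closed:
  fixes N :: nat
  assumes N: "N = 2^j" and fsub: "f \<subseteq> {..<N}"
    and s: "s \<in> f" "(s + N - 1) mod N \<notin> f"
    and L1: "(s + L) mod N \<notin> f" and L2: "\<forall>k<L. (s + k) mod N \<in> f"
    and st: "(s, t) \<in> (adj1 j f)\<^sup>*"
  shows "\<exists>k<L. t = (s + k) mod N"
  using st
proof (induction rule: rtrancl_induct)
  case base
  have "s < N" using s fsub by auto
  moreover have "0 < L" using L1 s \<open>s < N\<close> by (cases L) auto
  ultimately show ?case by (intro exI[of _ 0]) auto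
next
  case (step u v)
  from step.IH obtain k where k: "k < L" "u = (s + k) mod N" by blast
  have Npos: "N > 0" using N by simp
  have uv: "u \<in> f" "v \<in> f" "v = (u + 1) mod N \<or> u = (v + 1) mod N"
    using step.hyps(2) unfolding adj1_def N by auto
  have vN: "v < N" using uv fsub by auto
  show ?case
  proof (cases "v = (u + 1) mod N")
    case True
    then have v: "v = (s + (k+1)) mod N" using k by (simp add: mod_Suc_eq)
    show ?thesis
    proof (cases "k + 1 < L")
      case True then show ?thesis using v by blast
    next
      case False then have "k + 1 = L" using k by simp
      then show ?thesis using v uv L1 by simp
    qed
  next
    case False
    then have u: "u = (v + 1) mod N" using uv by blast
    have uN: "u < N" using Npos k by simp
    have v: "v = (u + N - 1) mod N" using pred_iff[of v N u] vN uN u by simp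
    show ?thesis
    proof (cases k)
      case 0
      then have "u = s mod N" using k by simp
      moreover have "s < N" using s fsub by auto
      ultimately show ?thesis using v uv s by simp
    next
      case (Suc k')
      have "v = (s + k + N - 1) mod N" using v k modpred[OF Npos] by simp
      also have "s + k + N - 1 = (s + k') + N" using Suc by simp
      finally have "v = (s + k') mod N" by simp
      then show ?thesis using Suc k by (intro exI[of _ k']) auto
    qed
  qed
qed

lemma starts_le_paths:
  assumes f: "f \<subseteq> {..<2^j}" and ne: "f \<noteq> {..<2^j}"
  shows "card {e \<in> f. (e + 2^j - 1) mod 2^j \<notin> f} \<le> card (f // conn1 j f)"
proof -
  define N :: nat where "N = 2^j"
  have Npos: "N > 0" unfolding N_def by simp
  define T where "T = {e \<in> f. (e + N - 1) mod N \<notin> f}"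
  obtain e0 where e0: "e0 < N" "e0 \<notin> f" using f ne unfolding N_def by blast
  have inj: "inj_on (\<lambda>s. conn1 j f `` {s}) T"
  proof (rule inj_onI)
    fix s t assume sT: "s \<in> T" and tT: "t \<in> T" and eq: "conn1 j f `` {s} = conn1 j f `` {t}"
    have sN: "s < N" using sT f unfolding T_def N_def by auto
    have "(t, t) \<in> conn1 j f" using tT unfolding T_def conn1_def by auto
    then have "(s, t) \<in> conn1 j f" using eq by blast
    then have st: "(s, t) \<in> (adj1 j f)\<^sup>*" unfolding conn1_def by blast
    have ex: "\<exists>L. (s + L) mod N \<notin> f"
    proof
      have "(s + (e0 + N - s)) mod N = e0" using sN e0 by simp
      then show "(s + (e0 + N - s)) mod N \<notin> f" using e0 by simp
    qed
    define L where "L = (LEAST L. (s + L) mod N \<notin> f)"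
    have L1: "(s + L) mod N \<notin> f" unfolding L_def using LeastI_ex[OF ex] .
    have L2: "\<forall>k<L. (s + k) mod N \<in> f" unfolding L_def using not_less_Least by blast
    obtain k where k: "k < L" "t = (s + k) mod N"
      using run_closed[OF N_def _ _ _ L1 L2 st] f sT unfolding T_def N_def by blast
    show "s = t"
    proof (cases k)
      case 0 then show ?thesis using k sN by simp
    next
      case (Suc k')
      have "(t + N - 1) mod N = (s + k + N - 1) mod N" using k modpred[OF Npos] by simp
      also have "s + k + N - 1 = (s + k') + N" using Suc by simp
      finally have "(t + N - 1) mod N = (s + k') mod N" by simp
      moreover have "(s + k') mod N \<in> f" using L2 k Suc by simp
      ultimately show ?thesis using tT unfolding T_def by simp
    qed
  qed
  have img: "(\<lambda>s. conn1 j f `` {s}) ` T \<subseteq> f // conn1 j f"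
    unfolding T_def quotient_def by blast
  have fin: "finite (f // conn1 j f)"
  proof -
    have "f // conn1 j f \<subseteq> Pow f" unfolding quotient_def conn1_def by blast
    moreover have "finite f" using f finite_subset by blast
    ultimately show ?thesis using finite_subset by blast
  qed
  have "card T \<le> card (f // conn1 j f)"
    using card_inj_on_le[OF inj img fin] .
  then show ?thesis unfolding T_def N_def .
qed

lemma reduce_mem:
  fixes f :: "nat set"
  assumes m: "m < 2^i"
  defines "S \<equiv> syndrome1 (i+1) f"
  defines "A \<equiv> stage_a_blocks i S"
  shows "2*m \<in> reduce1 i f \<longleftrightarrow> ((2*m \<in> f) \<noteq> (2*m+1 \<in> S \<and> m \<notin> A))"
    and "2*m+1 \<in> reduce1 i f \<longleftrightarrow> ((2*m+1 \<in> f) \<noteq> (m \<in> A))"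
proof -
  have o1: "2*m+1 \<in> {2*m'+1 | m'. m' \<in> A} \<longleftrightarrow> m \<in> A" by auto
  have o2: "2*m \<notin> {2*m'+1 | m'. m' \<in> A}" by (auto, presburger)
  have e1: "2*m \<in> {2*m' | m'. P m'} \<longleftrightarrow> P m" for P by auto
  have e2: "2*m+1 \<notin> {2*m' | m'. P m'}" for P by (auto, presburger)
  have e3: "2*m+1 \<notin> {(2*m'+2) mod 2^(i+1) | m'. m' \<in> A}"
  proof
    assume "2*m+1 \<in> {(2*m'+2) mod 2^(i+1) | m'. m' \<in> A}"
    then obtain m' where "2*m+1 = (2*m'+2) mod 2^(i+1)" by blast
    moreover have "(2*m'+2) mod 2^(i+1) = 2 * ((m'+1) mod 2^i)"
      using mult_mod_right[of 2 "m'+1" "2^i"] by simp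
    ultimately have "2*m+1 = 2 * ((m'+1) mod 2^i)" by simp
    then have "even (2*m+1)" by (metis dvd_triv_left)
    then show False by simp
  qed
  show "2*m \<in> reduce1 i f \<longleftrightarrow> ((2*m \<in> f) \<noteq> (2*m+1 \<in> S \<and> m \<notin> A))"
    unfolding reduce1_def Let_def symdiff_def S_def[symmetric] A_def[symmetric]
    using o2 e1 e3 m o1 by auto
  show "2*m+1 \<in> reduce1 i f \<longleftrightarrow> ((2*m+1 \<in> f) \<noteq> (m \<in> A))"
    unfolding reduce1_def Let_def symdiff_def S_def[symmetric] A_def[symmetric]
    using o1 e2 by auto
qed

lemma image_sub:
  fixes f :: "nat set"
  assumes f: "f \<subseteq> {..<2^(i+1)}" and mI: "m \<in> image1 i f"
  shows "m < 2^i \<and> ((2*m \<in> f \<and> 2*m+1 \<in> f) \<or>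
     (2*m \<in> f \<and> 2*m+1 \<notin> f \<and> (2*m+2) mod 2^(i+1) \<in> f) \<or>
     (2*m \<notin> f \<and> 2*m+1 \<in> f \<and> (2*m+2) mod 2^(i+1) \<in> f))"
proof -
  define N :: nat where "N = 2^(i+1)"
  have Npos: "N > 0" unfolding N_def by simp
  have m: "m < 2^i" using mI unfolding image1_def by auto
  have mN: "2*m+1 < N" using m unfolding N_def by simp
  define S where "S = syndrome1 (i+1) f"
  define A where "A = stage_a_blocks i S"
  have p1: "(2*m+1 + N - 1) mod N = 2*m" using mN by simp
  have p2: "((2*m+2) mod N + N - 1) mod N = 2*m+1"
  proof -
    have "((2*m+2) mod N + N - 1) mod N = (2*m+2 + N - 1) mod N" using modpred[OF Npos] by simp
    also have "2*m+2 + N - 1 = (2*m+1) + N" by simp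
    finally show ?thesis using mN by (metis mod_add_self2 mod_less)
  qed
  have S1: "2*m+1 \<in> S \<longleftrightarrow> ((2*m+1 \<in> f) \<noteq> (2*m \<in> f))"
    using synd_iff[OF f _ mN[unfolded N_def]] p1 unfolding S_def N_def by simp
  have S2: "(2*m+2) mod N \<in> S \<longleftrightarrow> (((2*m+2) mod N \<in> f) \<noteq> (2*m+1 \<in> f))"
    using synd_iff[OF f _, of "(2*m+2) mod N"] p2 Npos unfolding S_def N_def by simp
  have Am: "m \<in> A \<longleftrightarrow> 2*m+1 \<in> S \<and> (2*m+2) mod N \<in> S"
    unfolding A_def stage_a_blocks_def N_def using m by simp
  have r1: "2*m \<in> reduce1 i f" and r2: "2*m+1 \<in> reduce1 i f"
    using mI unfolding image1_def by auto
  show ?thesis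
    using reduce_mem[OF m, of f] r1 r2 S1 S2 Am m
    unfolding S_def[symmetric] A_def[symmetric] N_def[symmetric] by auto
qed

theorem lemma2:
  fixes i :: nat and e_i e_i1 :: "nat set"
  assumes "is_pattern1 i e_i"
    and "is_preimage1 i e_i1 e_i"
  shows "wt e_i1 + num_paths (i+1) e_i1 \<ge> 2 * wt e_i"
proof -
  define f where "f = e_i1"
  define N :: nat where "N = 2^(i+1)"
  define M :: nat where "M = 2^i"
  have NM: "N = 2*M" unfolding N_def M_def by simp
  have Npos: "N > 0" unfolding N_def by simp
  have f: "f \<subseteq> {..<N}" using assms(2) unfolding is_preimage1_def is_pattern1_def edges1_def f_def N_def
    by simp
  have finf: "finite f" using f finite_subset by blast
  have img: "image1 i f = e_i" using assms(2) unfolding is_preimage1_def f_def by simp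
  define B2 where "B2 = {m. m < M \<and> 2*m \<in> f \<and> 2*m+1 \<in> f}"
  define D1 where "D1 = {m. m < M \<and> 2*m \<in> f \<and> 2*m+1 \<notin> f \<and> (2*m+2) mod N \<in> f}"
  define D2 where "D2 = {m. m < M \<and> 2*m \<notin> f \<and> 2*m+1 \<in> f \<and> (2*m+2) mod N \<in> f}"
  have finB: "finite B2" "finite D1" "finite D2" unfolding B2_def D1_def D2_def by auto
  have sub: "e_i \<subseteq> B2 \<union> D1 \<union> D2"
    using image_sub[OF f[unfolded N_def]] img unfolding B2_def D1_def D2_def M_def N_def by blast
  have c1: "card e_i \<le> card B2 + card D1 + card D2"
  proof -
    have "card e_i \<le> card (B2 \<union> D1 \<union> D2)" using card_mono[OF _ sub] finB by simp
    also have "\<dots> \<le> card B2 + card D1 + card D2"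
      by (metis add_le_mono card_Un_le le_refl order_trans)
    finally show ?thesis .
  qed
  have c2: "2 * card B2 + card D1 + card D2 \<le> card f"
  proof -
    define E where "E = (\<lambda>m. 2*m) ` (B2 \<union> D1)"
    define Od where "Od = (\<lambda>m. 2*m+1) ` (B2 \<union> D2)"
    have dB1: "B2 \<inter> D1 = {}" "B2 \<inter> D2 = {}" unfolding B2_def D1_def D2_def by auto
    have cE: "card E = card B2 + card D1" unfolding E_def
      by (subst card_image) (auto simp: inj_on_def finB dB1 card_Un_disjoint)
    have cO: "card Od = card B2 + card D2" unfolding Od_def
      by (subst card_image) (auto simp: inj_on_def finB dB1 card_Un_disjoint)
    have dEO: "E \<inter> Od = {}" unfolding E_def Od_def by (auto; presburger)
    have "E \<union> Od \<subseteq> f" unfolding E_def Od_def B2_def D1_def D2_def by auto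
    then have "card (E \<union> Od) \<le> card f" using finf card_mono by blast
    moreover have "card (E \<union> Od) = card E + card Od"
      using dEO card_Un_disjoint[of E Od] finB unfolding E_def Od_def by auto
    ultimately show ?thesis using cE cO by simp
  qed
  have c3: "card D1 + card D2 \<le> num_paths (i+1) f"
  proof (cases "f = edges1 (i+1)")
    case True
    then have "D1 = {}" "D2 = {}" unfolding D1_def D2_def edges1_def N_def M_def by auto
    then show ?thesis by simp
  next
    case False
    define T where "T = {e \<in> f. (e + N - 1) mod N \<notin> f}"
    have ne: "f \<noteq> {..<2^(i+1)}" using False unfolding edges1_def by simp
    have cT: "card T \<le> num_paths (i+1) f"
      using starts_le_paths[OF f[unfolded N_def] ne] False unfolding num_paths_def T_def N_def by simp
    define X where "X = (\<lambda>m. 2*m+1) ` D2"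
    define Y where "Y = (\<lambda>m. (2*m+2) mod N) ` D1"
    have XT: "X \<subseteq> T"
    proof
      fix x assume "x \<in> X"
      then obtain m where m: "m \<in> D2" "x = 2*m+1" unfolding X_def by blast
      have "(2*m+1 + N - 1) mod N = 2*m" using m NM unfolding D2_def by simp
      then show "x \<in> T" using m unfolding T_def D2_def by simp
    qed
    have YT: "Y \<subseteq> T"
    proof
      fix x assume "x \<in> Y"
      then obtain m where m: "m \<in> D1" "x = (2*m+2) mod N" unfolding Y_def by blast
      have "2*m+1 < N" using m NM unfolding D1_def by simp
      then have "(x + N - 1) mod N = 2*m+1" using p2gen[OF Npos] m by simp
      then show "x \<in> T" using m unfolding T_def D1_def by simp
    qed
    have cX: "card X = card D2" unfolding X_def by (rule card_image) (auto simp: inj_on_def)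
    have injY: "inj_on (\<lambda>m. (2*m+2) mod N) D1"
    proof (rule inj_onI)
      fix a b assume a: "a \<in> D1" and b: "b \<in> D1" and eq: "(2*a+2) mod N = (2*b+2) mod N"
      have "2*a+1 < N" "2*b+1 < N" using a b NM unfolding D1_def by auto
      then have "2*a+1 = 2*b+1" using p2gen[OF Npos, of a] p2gen[OF Npos, of b] eq by metis
      then show "a = b" by simp
    qed
    have cY: "card Y = card D1" unfolding Y_def using card_image[OF injY] .
    have dXY: "X \<inter> Y = {}"
    proof -
      have "(2*m+2) mod N = 2 * ((m+1) mod M)" for m
        using mult_mod_right[of 2 "m+1" M] NM by simp
      then have ev: "y \<in> Y \<Longrightarrow> even y" for y unfolding Y_def by auto
      have od: "x \<in> X \<Longrightarrow> odd x" for x unfolding X_def by auto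
      show ?thesis using ev od by blast
    qed
    have finT: "finite T" using finf unfolding T_def by simp
    have "card X + card Y = card (X \<union> Y)"
      using card_Un_disjoint[of X Y] dXY finB unfolding X_def Y_def by auto
    also have "\<dots> \<le> card T" using XT YT finT card_mono by (metis Un_least)
    finally show ?thesis using cT cX cY by simp
  qed
  show ?thesis using c1 c2 c3 unfolding wt_def f_def by simp
qed

end
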